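(* Let $K$ be a fractal gasket with $\omega_\alpha,\omega_\beta\in K$. If $K$ satisfies the top isolated condition or $\omega_\gamma\notin K$, then every nontrivial connected component of $K$ (one containing more than one point) is a line segment. If in addition $\alpha$ and $\beta$ are not in the same horizontal block, then $K$ is totally disconnected.
   Context: Let $\Delta\subset\mathbb R^2$ be the triangle with vertices $\omega_\alpha=(0,0)$, $\omega_\beta=(1,0)$, $\omega_\gamma=(1/2,\sqrt3/2)$. A fractal gasket is the attractor $K$ of $\{\varphi_j(z)=r_j(z+d_j)\}_{j=1}^N$, $r_j\in(0,1)$, $d_j\in\mathbb R^2$, with $\bigcup_j\varphi_j(\Delta)\subset\Delta$ and, for $i\ne j$, $\varphi_i(\Delta)\cap\varphi_j(\Delta)$ consisting only of common vertices. $\Sigma=\{1,\dots,N\}$; when $\omega_\alpha\in K$, $\alpha\in\Sigma$ is the index with $\varphi_\alpha((0,0))=(0,0)$, and when $\omega_\beta\in K$, $\beta\in\Sigma$ is the index with $\varphi_\beta((1,0))=(1,0)$; $\gamma=-3$ if $\omega_\gamma\notin K$, otherwise $\varphi_\gamma(\omega_\gamma)=\omega_\gamma$. Top isolated condition: $\omega_\gamma\in K$ and $\varphi_\gamma(\Delta)\cap\varphi_j(\Delta)=\emptyset$ for all $j\ne\gamma$. A horizontal block is a set $I=\{i_1,\dots,i_k\}\subset\Sigma$ with $\varphi_{i_j}(\omega_\beta)=\varphi_{i_{j+1}}(\omega_\alpha)$ for $1\le j\le k-1$, maximal with this property. *)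

theory Defs
  imports "HOL-Analysis.Analysis"
begin

definition w_alpha :: "real \<times> real" where "w_alpha = (0, 0)"
definition w_beta :: "real \<times> real" where "w_beta = (1, 0)"
definition w_gamma :: "real \<times> real" where "w_gamma = (1/2, sqrt 3 / 2)"

definition Delta :: "(real \<times> real) set" where
  "Delta = convex hull {w_alpha, w_beta, w_gamma}"

definition sim :: "(nat \<Rightarrow> real) \<Rightarrow> (nat \<Rightarrow> real \<times> real) \<Rightarrow> nat \<Rightarrow> real \<times> real \<Rightarrow> real \<times> real" where
  "sim r d j z = r j *\<^sub>R (z + d j)"

definition fractal_gasket :: "nat \<Rightarrow> (nat \<Rightarrow> real) \<Rightarrow> (nat \<Rightarrow> real \<times> real) \<Rightarrow> (real \<times> real) set \<Rightarrow> bool" where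
  "fractal_gasket N r d K \<longleftrightarrow>
     N \<ge> 1 \<and>
     (\<forall>j\<in>{1..N}. 0 < r j \<and> r j < 1) \<and>
     (\<Union>j\<in>{1..N}. sim r d j ` Delta) \<subseteq> Delta \<and>
     (\<forall>i\<in>{1..N}. \<forall>j\<in>{1..N}. i \<noteq> j \<longrightarrow>
         sim r d i ` Delta \<inter> sim r d j ` Delta \<subseteq>
         sim r d i ` {w_alpha, w_beta, w_gamma} \<inter> sim r d j ` {w_alpha, w_beta, w_gamma}) \<and>
     compact K \<and> K \<noteq> {} \<and> K = (\<Union>j\<in>{1..N}. sim r d j ` K)"

definition top_isolated :: "nat \<Rightarrow> (nat \<Rightarrow> real) \<Rightarrow> (nat \<Rightarrow> real \<times> real) \<Rightarrow> (real \<times> real) set \<Rightarrow> bool" where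
  "top_isolated N r d K \<longleftrightarrow> w_gamma \<in> K \<and>
     (\<exists>g\<in>{1..N}. sim r d g w_gamma = w_gamma \<and>
        (\<forall>j\<in>{1..N}. j \<noteq> g \<longrightarrow> sim r d g ` Delta \<inter> sim r d j ` Delta = {}))"

definition horizontal_chain :: "(nat \<Rightarrow> real) \<Rightarrow> (nat \<Rightarrow> real \<times> real) \<Rightarrow> nat list \<Rightarrow> bool" where
  "horizontal_chain r d xs \<longleftrightarrow> xs \<noteq> [] \<and> distinct xs \<and>
     (\<forall>j. Suc j < length xs \<longrightarrow> sim r d (xs ! j) w_beta = sim r d (xs ! Suc j) w_alpha)"

definition horizontal_set :: "nat \<Rightarrow> (nat \<Rightarrow> real) \<Rightarrow> (nat \<Rightarrow> real \<times> real) \<Rightarrow> nat set \<Rightarrow> bool" where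
  "horizontal_set N r d I \<longleftrightarrow> I \<subseteq> {1..N} \<and> (\<exists>xs. horizontal_chain r d xs \<and> set xs = I)"

definition horizontal_block :: "nat \<Rightarrow> (nat \<Rightarrow> real) \<Rightarrow> (nat \<Rightarrow> real \<times> real) \<Rightarrow> nat set \<Rightarrow> bool" where
  "horizontal_block N r d I \<longleftrightarrow> horizontal_set N r d I \<and>
     (\<forall>J. horizontal_set N r d J \<and> I \<subseteq> J \<longrightarrow> J = I)"

definition totally_disconnected :: "'a::topological_space set \<Rightarrow> bool" where
  "totally_disconnected S \<longleftrightarrow> (\<forall>x\<in>S. connected_component_set S x = {x})"

end

theory Submission
  imports Defs
begin

lemma sqrt3_facts: "sqrt 3 > 0" "sqrt 3 * sqrt 3 = 3" by auto

lemma Delta_eq: "Delta = {z. 0 \<le> snd z \<and> snd z \<le> sqrt 3 * fst z \<and> snd z \<le> sqrt 3 * (1 - fst z)}"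
proof -
  have s: "sqrt 3 > 0" "sqrt 3 * sqrt 3 = 3" by auto
  show ?thesis
  proof (rule set_eqI, rule iffI)
    fix z assume "z \<in> Delta"
    then obtain u v w where uvw: "0 \<le> u" "0 \<le> v" "0 \<le> w" "u + v + w = 1"
      and z: "z = u *\<^sub>R w_alpha + v *\<^sub>R w_beta + w *\<^sub>R w_gamma"
      unfolding Delta_def convex_hull_3 by blast
    have fz: "fst z = v + w/2" and sz: "snd z = w * sqrt 3 / 2"
      using z by (auto simp: w_alpha_def w_beta_def w_gamma_def)
    show "z \<in> {z. 0 \<le> snd z \<and> snd z \<le> sqrt 3 * fst z \<and> snd z \<le> sqrt 3 * (1 - fst z)}"
    proof -
      have "(v+w) * sqrt 3 \<le> 1 * sqrt 3" using uvw by (intro mult_right_mono) auto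
      then show ?thesis using uvw s unfolding mem_Collect_eq fz sz
        by (auto simp: algebra_simps)
    qed
  next
    fix z assume "z \<in> {z. 0 \<le> snd z \<and> snd z \<le> sqrt 3 * fst z \<and> snd z \<le> sqrt 3 * (1 - fst z)}"
    then have h: "0 \<le> snd z" "snd z \<le> sqrt 3 * fst z" "snd z \<le> sqrt 3 * (1 - fst z)" by auto
    define w where "w = 2 * snd z / sqrt 3"
    define v where "v = fst z - snd z / sqrt 3"
    define u where "u = 1 - fst z - snd z / sqrt 3"
    have "snd z / sqrt 3 \<le> fst z" using h s by (simp add: divide_le_eq mult.commute)
    then have v0: "0 \<le> v" unfolding v_def by simp
    have "snd z / sqrt 3 \<le> 1 - fst z" using h s by (simp add: divide_le_eq mult.commute)
    then have u0: "0 \<le> u" unfolding u_def by simp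
    have w0: "0 \<le> w" unfolding w_def using h s by simp
    have sum: "u + v + w = 1" unfolding u_def v_def w_def by (simp add: field_simps)
    have "z = u *\<^sub>R w_alpha + v *\<^sub>R w_beta + w *\<^sub>R w_gamma"
      unfolding u_def v_def w_def w_alpha_def w_beta_def w_gamma_def
      using s by (auto simp: prod_eq_iff field_simps)
    then show "z \<in> Delta" unfolding Delta_def convex_hull_3 using u0 v0 w0 sum by blast
  qed
qed

lemma convex_Delta: "convex Delta" unfolding Delta_def by (simp add: convex_convex_hull)
lemma compact_Delta: "compact Delta" unfolding Delta_def by (simp add: compact_convex_hull)
lemma verts_Delta: "w_alpha \<in> Delta" "w_beta \<in> Delta" "w_gamma \<in> Delta"
  unfolding Delta_def by (auto intro: hull_inc)
lemma mid_Delta: "((1/2, 0)::real\<times>real) \<in> Delta" by (simp add: Delta_eq)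
lemma mid_not_vert: "((1/2, 0)::real\<times>real) \<notin> {w_alpha, w_beta, w_gamma}"
  by (auto simp: w_alpha_def w_beta_def w_gamma_def)

lemma sim_alt: "sim r d j z = r j *\<^sub>R z + sim r d j w_alpha"
  by (simp add: sim_def w_alpha_def scaleR_add_right zero_prod_def[symmetric])

lemma sim_fst: "fst (sim r d j z) = r j * fst z + fst (sim r d j w_alpha)"
  by (subst sim_alt) simp
lemma sim_snd: "snd (sim r d j z) = r j * snd z + snd (sim r d j w_alpha)"
  by (subst sim_alt) simp

lemma sim_dist: "0 < r j \<Longrightarrow> dist (sim r d j x) (sim r d j y) = r j * dist x y"
  by (simp add: sim_def dist_norm scaleR_add_right flip: scaleR_diff_right)

lemma sim_inj: "0 < r j \<Longrightarrow> inj (sim r d j)"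
  by (auto simp: inj_def sim_def)

lemma sim_cont: "continuous_on A (sim r d j)"
  unfolding sim_def by (intro continuous_intros)

definition psi :: "(nat \<Rightarrow> real) \<Rightarrow> (nat \<Rightarrow> real \<times> real) \<Rightarrow> nat \<Rightarrow> real \<times> real \<Rightarrow> real \<times> real" where
  "psi r d j z = (1 / r j) *\<^sub>R z - d j"

lemma psi_sim: "0 < r j \<Longrightarrow> psi r d j (sim r d j z) = z"
  by (simp add: psi_def sim_def)
lemma psi_cont: "continuous_on A (psi r d j)"
  unfolding psi_def by (intro continuous_intros)

lemma sup_trick:
  fixes f :: "'a \<Rightarrow> real"
  assumes bd: "\<And>q. q \<in> Q \<Longrightarrow> f q \<le> B" and c: "0 \<le> c" "c < 1"
    and step: "\<And>q. q \<in> Q \<Longrightarrow> \<exists>q'\<in>Q. f q \<le> c * f q'"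
  shows "q \<in> Q \<Longrightarrow> f q \<le> 0"
proof -
  assume q: "q \<in> Q"
  define s where "s = Sup (f ` Q)"
  have bdd: "bdd_above (f ` Q)" using bd by (meson bdd_aboveI2)
  have up: "\<And>q. q \<in> Q \<Longrightarrow> f q \<le> s" unfolding s_def using bdd by (auto intro: cSup_upper)
  have "s \<le> c * s" unfolding s_def
  proof (rule cSup_least)
    show "f ` Q \<noteq> {}" using q by auto
    fix x assume "x \<in> f ` Q"
    then obtain q1 where q1: "q1 \<in> Q" "x = f q1" by auto
    then obtain q' where "q' \<in> Q" "f q1 \<le> c * f q'" using step by blast
    moreover have "c * f q' \<le> c * Sup (f ` Q)" using up[OF \<open>q' \<in> Q\<close>] c
      by (intro mult_left_mono) (auto simp: s_def)
    ultimately show "x \<le> c * Sup (f ` Q)" using q1 by linarith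
  qed
  then have "s \<le> 0" using c by (smt (verit) mult_le_cancel_right1)
  then show ?thesis using up[OF q] by linarith
qed

lemma bb_lemma:
  fixes C F :: "'a::euclidean_space set"
  assumes "compact C" "connected C" "closed F" "x \<in> C" "x \<in> F" "\<not> C \<subseteq> F"
  shows "\<exists>D. connected D \<and> x \<in> D \<and> D \<subseteq> C \<inter> F \<and> D \<inter> closure (C - F) \<noteq> {}"
proof -
  let ?X = "top_of_set C"
  let ?S = "C \<inter> F"
  have cs: "connected_space ?X" using assms by (simp add: connected_space_subtopology)
  have ks: "compact_space ?X" using assms by (simp add: compact_space_subtopology)
  have hs: "Hausdorff_space ?X" by (simp add: Hausdorff_space_subtopology)
  have cl: "closedin ?X ?S" using assms by (simp add: closedin_closed_Int)
  have ne: "?S \<noteq> topspace ?X" using assms by auto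
  define D where "D = connected_component_of_set (subtopology ?X ?S) x"
  have xs: "x \<in> topspace (subtopology ?X ?S)" using assms by auto
  have Dc: "D \<in> connected_components_of (subtopology ?X ?S)"
    unfolding D_def using xs by (simp add: connected_component_in_connected_components_of)
  have "D \<inter> ?X frontier_of ?S \<noteq> {}"
    using boundary_bumping_theorem_closed[OF cs ks hs cl ne Dc] .
  moreover have "?X frontier_of ?S \<subseteq> closure (C - F)"
    proof -
    have e: "C - C \<inter> F = C - F" "C \<inter> (C - F) = C - F" by blast+
    show ?thesis by (auto simp: frontier_of_closures closure_of_subtopology e)
  qed
  moreover have "connectedin (subtopology ?X ?S) D"
    unfolding D_def by (rule connectedin_connected_component_of)
  then have "connected D" "D \<subseteq> ?S"
    by (auto simp: connectedin_subtopology)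
  moreover have "x \<in> D" unfolding D_def using xs by (simp add: connected_component_of_refl)
  ultimately show ?thesis by blast
qed

lemma hseg: "closed_segment ((m::real), (c::real)) (M, c) = (\<lambda>t. (t, c)) ` closed_segment m M"
proof -
  have "(1 - u) *\<^sub>R (m, c) + u *\<^sub>R (M, c) = ((1 - u) *\<^sub>R m + u *\<^sub>R M, c)" for u :: real
    by (simp add: algebra_simps)
  then show ?thesis unfolding closed_segment_def by (auto simp: image_iff)
qed

lemma line_seg:
  fixes E :: "(real \<times> real) set"
  assumes E: "connected E" and h: "\<And>z. z \<in> E \<Longrightarrow> snd z = c" and u: "u \<in> E" and w: "w \<in> E"
  shows "closed_segment u w \<subseteq> E"
proof
  fix z assume z: "z \<in> closed_segment u w"
  have "connected (fst ` E)" using E by (intro connected_continuous_image continuous_intros)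
  then have cf: "convex (fst ` E)"
    by (simp add: is_interval_convex_1[symmetric] is_interval_connected_1)
  have u': "u = (fst u, c)" "w = (fst w, c)" using h u w by (auto simp: prod_eq_iff)
  have "z \<in> closed_segment (fst u, c) (fst w, c)" using z u' by simp
  then obtain t where t: "t \<in> closed_segment (fst u) (fst w)" "z = (t, c)" unfolding hseg by blast
  have "closed_segment (fst u) (fst w) \<subseteq> fst ` E" using cf u w by (intro closed_segment_subset) auto
  then obtain e where e: "e \<in> E" "t = fst e" using t by auto
  then have "z = e" using t h[OF e(1)] by (auto simp: prod_eq_iff)
  then show "z \<in> E" using e by simp
qed

lemma sim_seg: "sim r d j ` closed_segment x y = closed_segment (sim r d j x) (sim r d j y)"
proof -
  have aff: "(1 - u) *\<^sub>R sim r d j x + u *\<^sub>R sim r d j y = sim r d j ((1 - u) *\<^sub>R x + u *\<^sub>R y)" for u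
    by (simp add: sim_def algebra_simps)
  show ?thesis unfolding closed_segment_def by (auto simp: aff image_iff)
qed

lemma seg_alpha_beta: "closed_segment w_alpha w_beta = (\<lambda>t. (t, 0)) ` {0..1}"
  unfolding w_alpha_def w_beta_def hseg by (simp add: closed_segment_eq_real_ivl)


locale G =
  fixes N :: nat and r :: "nat \<Rightarrow> real" and d :: "nat \<Rightarrow> real \<times> real"
    and K :: "(real \<times> real) set" and a b :: nat
  assumes gasket: "fractal_gasket N r d K"
    and wa: "w_alpha \<in> K" and wb: "w_beta \<in> K"
    and a_in: "a \<in> {1..N}" and a_fix: "sim r d a w_alpha = w_alpha"
    and b_in: "b \<in> {1..N}" and b_fix: "sim r d b w_beta = w_beta"
    and top: "top_isolated N r d K \<or> w_gamma \<notin> K"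
begin

abbreviation "S \<equiv> {1..N}"
abbreviation "phi \<equiv> sim r d"
definition base :: "nat \<Rightarrow> real" where "base j = snd (phi j w_alpha)"
definition rho :: real where "rho = Max (r ` S)"

lemma r_pos: "j \<in> S \<Longrightarrow> 0 < r j" using gasket unfolding fractal_gasket_def by auto
lemma r_lt1: "j \<in> S \<Longrightarrow> r j < 1" using gasket unfolding fractal_gasket_def by auto
lemma phi_Delta: "j \<in> S \<Longrightarrow> z \<in> Delta \<Longrightarrow> phi j z \<in> Delta"
  using gasket unfolding fractal_gasket_def by blast
lemma overlap: "i \<in> S \<Longrightarrow> j \<in> S \<Longrightarrow> i \<noteq> j \<Longrightarrow>
   phi i ` Delta \<inter> phi j ` Delta \<subseteq> phi i ` {w_alpha, w_beta, w_gamma} \<inter> phi j ` {w_alpha, w_beta, w_gamma}"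
  using gasket unfolding fractal_gasket_def by blast
lemma compactK: "compact K" using gasket unfolding fractal_gasket_def by blast
lemma closedK: "closed K" using compactK by (rule compact_imp_closed)
lemma boundedK: "bounded K" using compactK by (rule compact_imp_bounded)
lemma K_eq: "K = (\<Union>j\<in>S. phi j ` K)" using gasket unfolding fractal_gasket_def by blast
lemma S_fin: "finite S" by simp
lemma S_ne: "S \<noteq> {}" using a_in by auto

lemma rho_ge: "j \<in> S \<Longrightarrow> r j \<le> rho" unfolding rho_def by simp
lemma rho_lt1: "rho < 1"
proof -
  have "rho \<in> r ` S" unfolding rho_def using S_ne by (intro Max_in) auto
  then show ?thesis using r_lt1 by auto
qed
lemma rho_pos: "0 < rho" using rho_ge[OF a_in] r_pos[OF a_in] by linarith

lemma snd_phi: "snd (phi j z) = base j + r j * snd z" unfolding base_def using sim_snd[of r d j z] by linarith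
lemma fst_phi: "fst (phi j z) = fst (phi j w_alpha) + r j * fst z" using sim_fst[of r d j z] by linarith
lemma phi_dist: "j \<in> S \<Longrightarrow> dist (phi j x) (phi j y) = r j * dist x y"
  using r_pos by (simp add: sim_dist)
lemma phi_inj: "j \<in> S \<Longrightarrow> phi j x = phi j y \<longleftrightarrow> x = y"
proof -
  assume j: "j \<in> S"
  have "inj (phi j)" using sim_inj r_pos[OF j] by blast
  then show ?thesis by (auto dest: injD)
qed
lemma psi_phi: "j \<in> S \<Longrightarrow> psi r d j (phi j z) = z" using r_pos by (simp add: psi_sim)

lemma phi_alpha_Delta: "j \<in> S \<Longrightarrow> phi j w_alpha \<in> Delta"
  and phi_beta_Delta: "j \<in> S \<Longrightarrow> phi j w_beta \<in> Delta"
  and phi_gamma_Delta: "j \<in> S \<Longrightarrow> phi j w_gamma \<in> Delta"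
  using phi_Delta verts_Delta by auto

lemma snd_alpha: "snd (phi j w_alpha) = base j" by (simp add: base_def)
lemma snd_beta: "snd (phi j w_beta) = base j" by (simp add: snd_phi w_beta_def)
lemma phi_beta: "phi j w_beta = phi j w_alpha + (r j, 0)"
proof -
  have "fst (phi j w_beta) = fst (phi j w_alpha) + r j"
    using fst_phi[of j w_beta] by (simp add: w_beta_def)
  then show ?thesis by (simp add: prod_eq_iff snd_beta snd_alpha)
qed

lemma base_nonneg: "j \<in> S \<Longrightarrow> 0 \<le> base j"
  using phi_alpha_Delta unfolding base_def Delta_eq by auto

lemma fst_alpha_nonneg: "j \<in> S \<Longrightarrow> 0 \<le> fst (phi j w_alpha)"
proof -
  assume j: "j \<in> S"
  have "0 \<le> base j" using base_nonneg[OF j] .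
  moreover have "base j \<le> sqrt 3 * fst (phi j w_alpha)"
    using phi_alpha_Delta[OF j] unfolding base_def Delta_eq by auto
  ultimately have "0 \<le> sqrt 3 * fst (phi j w_alpha)" by linarith
  then show ?thesis by (simp add: zero_le_mult_iff)
qed

lemma fst_beta_le1: "j \<in> S \<Longrightarrow> fst (phi j w_alpha) + r j \<le> 1"
proof -
  assume j: "j \<in> S"
  have "0 \<le> snd (phi j w_beta)" "snd (phi j w_beta) \<le> sqrt 3 * (1 - fst (phi j w_beta))"
    using phi_beta_Delta[OF j] unfolding Delta_eq by auto
  then have "0 \<le> sqrt 3 * (1 - fst (phi j w_beta))" by linarith
  then have "0 \<le> 1 - fst (phi j w_beta)" by (simp add: zero_le_mult_iff)
  then show ?thesis by (simp add: phi_beta)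
qed

lemma snd_gamma: "snd (phi j w_gamma) = base j + r j * (sqrt 3 / 2)" by (simp add: snd_phi w_gamma_def)

end


context G begin

lemma sub_if_same_vertex:
  assumes i: "i \<in> S" and j: "j \<in> S" and rr: "r i \<le> r j" and v: "v \<in> Delta"
    and eq: "phi i v = phi j v"
  shows "phi i ` Delta \<subseteq> phi j ` Delta"
proof
  fix x assume "x \<in> phi i ` Delta"
  then obtain w where w: "w \<in> Delta" "x = phi i w" by auto
  define t where "t = r i / r j"
  have t: "0 \<le> t" "t \<le> 1" using r_pos[OF i] r_pos[OF j] rr unfolding t_def by auto
  define u where "u = (1 - t) *\<^sub>R v + t *\<^sub>R w"
  have u: "u \<in> Delta" unfolding u_def using convex_Delta v w t
    by (intro convexD) auto
  have rt: "r j * t = r i" unfolding t_def using r_pos[OF j] by simp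
  have e1: "r i *\<^sub>R v + phi i w_alpha = r j *\<^sub>R v + phi j w_alpha"
    using eq by (metis sim_alt)
  have "phi j u = r j *\<^sub>R u + phi j w_alpha" by (rule sim_alt)
  also have "\<dots> = r j *\<^sub>R v - (r j * t) *\<^sub>R v + (r j * t) *\<^sub>R w + phi j w_alpha"
    unfolding u_def by (simp add: algebra_simps)
  also have "\<dots> = r i *\<^sub>R w + phi i w_alpha" unfolding rt using e1
    by (simp add: algebra_simps)
  also have "\<dots> = phi i w" by (rule sim_alt[symmetric])
  finally have "phi j u = phi i w" .
  then show "x \<in> phi j ` Delta" using u w(2) by (metis image_eqI)
qed

lemma vert_distinct_aux:
  assumes i: "i \<in> S" and j: "j \<in> S" and ij: "i \<noteq> j" and rr: "r i \<le> r j"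
    and v: "v \<in> {w_alpha, w_beta, w_gamma}"
  shows "phi i v \<noteq> phi j v"
proof
  assume eq: "phi i v = phi j v"
  have "v \<in> Delta" using v verts_Delta by auto
  then have sub: "phi i ` Delta \<subseteq> phi j ` Delta" using sub_if_same_vertex i j rr eq by blast
  have "phi i (1/2, 0) \<in> phi i ` Delta \<inter> phi j ` Delta" using sub mid_Delta by auto
  then have "phi i (1/2, 0) \<in> phi i ` {w_alpha, w_beta, w_gamma}" using overlap[OF i j ij] by blast
  then have "((1/2, 0)::real\<times>real) \<in> {w_alpha, w_beta, w_gamma}" using phi_inj[OF i] by blast
  then show False using mid_not_vert by blast
qed

lemma vert_distinct:
  assumes i: "i \<in> S" and j: "j \<in> S" and ij: "i \<noteq> j"
    and v: "v \<in> {w_alpha, w_beta, w_gamma}"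
  shows "phi i v \<noteq> phi j v"
proof (cases "r i \<le> r j")
  case True then show ?thesis using vert_distinct_aux i j ij v by blast
next
  case False then show ?thesis using vert_distinct_aux[of j i v] i j ij v by force
qed

lemma K_sub_Delta: "K \<subseteq> Delta"
proof -
  obtain B where B: "\<And>x. x \<in> K \<Longrightarrow> norm x \<le> B" using boundedK by (meson bounded_iff)
  have ne: "Delta \<noteq> {}" using verts_Delta by auto
  have clD: "closed Delta" using compact_Delta by (rule compact_imp_closed)
  have "infdist x Delta \<le> 0" if "x \<in> K" for x
  proof (rule sup_trick[where f = "\<lambda>x. infdist x Delta" and Q = K and B = B and c = rho])
    show "0 \<le> rho" "rho < 1" using rho_pos rho_lt1 by auto
    fix q assume q: "q \<in> K"
    have "infdist q Delta \<le> dist q w_alpha" using verts_Delta by (intro infdist_le) auto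
    also have "\<dots> = norm q" by (simp add: w_alpha_def dist_norm zero_prod_def[symmetric])
    finally show "infdist q Delta \<le> B" using B[OF q] by linarith
    obtain j y where jy: "j \<in> S" "y \<in> K" "q = phi j y" using q K_eq by blast
    obtain z where z: "z \<in> Delta" "infdist y Delta = dist y z"
      using infdist_attains_inf[OF clD ne] by blast
    have "infdist q Delta \<le> dist q (phi j z)" using phi_Delta[OF jy(1) z(1)] by (intro infdist_le)
    also have "\<dots> = r j * dist y z" using jy phi_dist by simp
    also have "\<dots> \<le> rho * dist y z" using rho_ge[OF jy(1)] by (intro mult_right_mono) auto
    finally have "infdist q Delta \<le> rho * infdist y Delta" using z(2) by simp
    then show "\<exists>q'\<in>K. infdist q Delta \<le> rho * infdist q' Delta" using jy(2) by blast
  next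
    show "x \<in> K" by fact
  qed
  then have "infdist x Delta = 0" if "x \<in> K" for x using that infdist_nonneg[of x Delta]
    by (meson order_antisym)
  then show ?thesis using in_closure_iff_infdist_zero[OF ne] closure_closed[OF clD] by blast
qed

lemma link:
  assumes i: "i \<in> S" and j: "j \<in> S" and ij: "i \<noteq> j"
    and x: "x \<in> phi i ` K" "x \<in> phi j ` K"
  shows "\<exists>v\<in>{w_alpha, w_beta, w_gamma}. v \<in> K \<and> x = phi i v"
proof -
  obtain y where y: "y \<in> K" "x = phi i y" using x by auto
  have "x \<in> phi i ` Delta \<inter> phi j ` Delta" using x K_sub_Delta by blast
  then obtain v where v: "v \<in> {w_alpha, w_beta, w_gamma}" "x = phi i v" using overlap[OF i j ij] by blast
  then have "v = y" using y phi_inj[OF i] by auto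
  then show ?thesis using v y by auto
qed

lemma alpha_piece: assumes j: "j \<in> S" and al: "w_alpha \<in> phi j ` Delta" shows "j = a"
proof -
  obtain w where w: "w \<in> Delta" "w_alpha = phi j w" using al by auto
  have wD: "0 \<le> snd w" "snd w \<le> sqrt 3 * fst w" using w(1) unfolding Delta_eq by auto
  from w(2) have "phi j w = w_alpha" by simp
  then have "snd (phi j w) = 0" by (simp add: w_alpha_def)
  then have "0 = base j + r j * snd w" using snd_phi[of j w] by simp
  moreover have "0 \<le> r j * snd w" using r_pos[OF j] wD by simp
  ultimately have b0: "base j = 0" "r j * snd w = 0" using base_nonneg[OF j] by linarith+
  have "0 \<le> fst w" using wD b0 r_pos[OF j] by (simp add: zero_le_mult_iff)
  then have f1: "0 \<le> r j * fst w" using r_pos[OF j] by simp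
  have "fst (phi j w) = 0" using \<open>phi j w = w_alpha\<close> by (simp add: w_alpha_def)
  then have "0 = fst (phi j w_alpha) + r j * fst w" using fst_phi[of j w] by linarith
  then have "fst (phi j w_alpha) = 0" using f1 fst_alpha_nonneg[OF j] by linarith
  then have "phi j w_alpha = w_alpha" using b0 snd_alpha[of j] by (simp add: prod_eq_iff w_alpha_def)
  then show "j = a" using vert_distinct[OF j a_in, of w_alpha] a_fix by auto
qed

lemma beta_piece: assumes j: "j \<in> S" and al: "w_beta \<in> phi j ` Delta" shows "j = b"
proof -
  obtain w where w: "w \<in> Delta" "w_beta = phi j w" using al by auto
  have wD: "0 \<le> snd w" "snd w \<le> sqrt 3 * (1 - fst w)" using w(1) unfolding Delta_eq by auto
  from w(2) have "phi j w = w_beta" by simp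
  then have "snd (phi j w) = 0" by (simp add: w_beta_def)
  then have "0 = base j + r j * snd w" using snd_phi[of j w] by simp
  moreover have "0 \<le> r j * snd w" using r_pos[OF j] wD by simp
  ultimately have b0: "base j = 0" "r j * snd w = 0" using base_nonneg[OF j] by linarith+
  have "0 \<le> 1 - fst w" using wD b0 r_pos[OF j] by (simp add: zero_le_mult_iff)
  then have f1: "r j * fst w \<le> r j" using r_pos[OF j] by simp
  have "fst (phi j w) = 1" using \<open>phi j w = w_beta\<close> by (simp add: w_beta_def)
  then have "1 = fst (phi j w_alpha) + r j * fst w" using fst_phi[of j w] by linarith
  then have "fst (phi j w_alpha) + r j = 1" using f1 fst_beta_le1[OF j] by linarith
  then have "phi j w_beta = w_beta" using b0 snd_beta[of j] phi_beta[of j] by (simp add: prod_eq_iff w_beta_def)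
  then show "j = b" using vert_distinct[OF j b_in, of w_beta] b_fix by auto
qed

lemma a_ne_b: "a \<noteq> b"
proof
  assume "a = b"
  then have "w_beta = w_alpha + (r a, 0)" using phi_beta[of a] a_fix b_fix by simp
  then have "r a = 1" by (simp add: w_alpha_def w_beta_def)
  then show False using r_lt1[OF a_in] by simp
qed

lemma alpha_in_a: "w_alpha \<in> phi a ` K" using a_fix wa by (metis image_eqI)
lemma beta_in_b: "w_beta \<in> phi b ` K" using b_fix wb by (metis image_eqI)

lemma alpha_K_piece: "j \<in> S \<Longrightarrow> w_alpha \<in> phi j ` K \<Longrightarrow> j = a"
  using alpha_piece K_sub_Delta by blast
lemma beta_K_piece: "j \<in> S \<Longrightarrow> w_beta \<in> phi j ` K \<Longrightarrow> j = b"
  using beta_piece K_sub_Delta by blast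

lemma compact_piece: "compact (phi j ` K)" using compactK sim_cont by (intro compact_continuous_image)
lemma closed_piece: "closed (phi j ` K)" using compact_piece by (rule compact_imp_closed)
lemma piece_sub: "j \<in> S \<Longrightarrow> phi j ` K \<subseteq> K" using K_eq by blast

lemma psi_img: assumes j: "j \<in> S" and E: "E \<subseteq> phi j ` K"
  shows "psi r d j ` E \<subseteq> K" "phi j ` (psi r d j ` E) = E"
proof -
  show "psi r d j ` E \<subseteq> K" using E psi_phi[OF j] by auto
  show "phi j ` (psi r d j ` E) = E"
  proof -
    have "\<And>x. x \<in> E \<Longrightarrow> phi j (psi r d j x) = x" using E psi_phi[OF j] by auto
    then show ?thesis by (simp add: image_image)
  qed
qed

lemma psi_connected: "connected E \<Longrightarrow> connected (psi r d j ` E)"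
  using psi_cont by (intro connected_continuous_image)

lemma base_le_snd: assumes j: "j \<in> S" and x: "x \<in> phi j ` K" shows "base j \<le> snd x"
proof -
  obtain y where y: "y \<in> K" "x = phi j y" using x by auto
  have "0 \<le> snd y" using y(1) K_sub_Delta by (auto simp: Delta_eq)
  then have "0 \<le> r j * snd y" using r_pos[OF j] by simp
  then show ?thesis using y(2) snd_phi[of j y] by simp
qed

end


lemma conn_split:
  assumes "connected E" "closed A" "closed B" "E \<subseteq> A \<union> B" "A \<inter> B \<inter> E = {}"
  shows "E \<subseteq> A \<or> E \<subseteq> B"
  using assms unfolding connected_closed by blast

lemma cut_lemma:
  assumes E: "connected E" and A: "closed A" and B: "closed B" and sub: "E \<subseteq> A \<union> B"
    and AB: "A \<inter> B \<subseteq> {p}" and p: "p \<in> E" "p \<in> A"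
  shows "connected (E \<inter> A)"
proof (rule ccontr)
  assume "\<not> connected (E \<inter> A)"
  then obtain e1 e2 where e: "closed e1" "closed e2" "E \<inter> A \<subseteq> e1 \<union> e2" "e1 \<inter> e2 \<inter> (E \<inter> A) = {}"
      "e1 \<inter> (E \<inter> A) \<noteq> {}" "e2 \<inter> (E \<inter> A) \<noteq> {}"
    unfolding connected_closed by blast
  have gen: False if f: "closed f1" "closed f2" "E \<inter> A \<subseteq> f1 \<union> f2" "f1 \<inter> f2 \<inter> (E \<inter> A) = {}"
      "f1 \<inter> (E \<inter> A) \<noteq> {}" "f2 \<inter> (E \<inter> A) \<noteq> {}" "p \<notin> f2" for f1 f2
  proof -
    have "closed (f1 \<union> B)" "closed (f2 \<inter> A)" using f A B by auto
    moreover have "E \<subseteq> (f1 \<union> B) \<union> (f2 \<inter> A)" using sub f(3) by blast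
    moreover have "(f1 \<union> B) \<inter> (f2 \<inter> A) \<inter> E = {}" using f(4) f(7) AB by blast
    moreover have "(f1 \<union> B) \<inter> E \<noteq> {}" using f(5) by blast
    moreover have "(f2 \<inter> A) \<inter> E \<noteq> {}" using f(6) by blast
    ultimately show False using E unfolding connected_closed by blast
  qed
  show False
  proof (cases "p \<in> e2")
    case True
    then have "p \<notin> e1" using e(4) p by blast
    then show False using gen[of e2 e1] e by (auto simp: Int_commute Un_commute)
  next
    case False
    then show False using gen[of e1 e2] e by auto
  qed
qed

context G begin

definition topc where "topc = top_isolated N r d K"
definition g where "g = (SOME g. g \<in> S \<and> phi g w_gamma = w_gamma \<and> (\<forall>j\<in>S. j \<noteq> g \<longrightarrow> phi g ` Delta \<inter> phi j ` Delta = {}))"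
definition Sp where "Sp = {j \<in> S. \<not> (topc \<and> j = g)}"
definition Ks where "Ks = (\<Union>l\<in>Sp. phi l ` K)"
definition P where "P j = phi j ` Ks"

lemma notop_gamma: "\<not> topc \<Longrightarrow> w_gamma \<notin> K" using top unfolding topc_def by blast

lemma g_props: assumes "topc"
  shows "g \<in> S" "phi g w_gamma = w_gamma" "\<And>j. j \<in> S \<Longrightarrow> j \<noteq> g \<Longrightarrow> phi g ` Delta \<inter> phi j ` Delta = {}"
    "w_gamma \<in> K"
proof -
  have ex: "\<exists>g. g \<in> S \<and> phi g w_gamma = w_gamma \<and> (\<forall>j\<in>S. j \<noteq> g \<longrightarrow> phi g ` Delta \<inter> phi j ` Delta = {})"
    using assms unfolding topc_def top_isolated_def by blast
  have "g \<in> S \<and> phi g w_gamma = w_gamma \<and> (\<forall>j\<in>S. j \<noteq> g \<longrightarrow> phi g ` Delta \<inter> phi j ` Delta = {})"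
    unfolding g_def by (rule someI_ex[OF ex])
  then show "g \<in> S" "phi g w_gamma = w_gamma" "\<And>j. j \<in> S \<Longrightarrow> j \<noteq> g \<Longrightarrow> phi g ` Delta \<inter> phi j ` Delta = {}"
    by auto
  show "w_gamma \<in> K" using assms unfolding topc_def top_isolated_def by blast
qed

lemma g_ne_a: "topc \<Longrightarrow> g \<noteq> a"
proof
  assume t: topc and ga: "g = a"
  have "phi a w_gamma = r a *\<^sub>R w_gamma + w_alpha" using a_fix sim_alt by metis
  then have "w_gamma = r a *\<^sub>R w_gamma" using g_props(2)[OF t] ga by (simp add: w_alpha_def zero_prod_def[symmetric])
  then have "r a = 1" by (simp add: w_gamma_def prod_eq_iff)
  then show False using r_lt1[OF a_in] by simp
qed

lemma g_ne_b: "topc \<Longrightarrow> g \<noteq> b"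
proof
  assume t: topc and gb: "g = b"
  have "snd (phi b w_gamma) = base b + r b * (sqrt 3 / 2)" by (rule snd_gamma)
  moreover have "base b = 0" using b_fix snd_beta[of b] by (simp add: w_beta_def)
  ultimately have "sqrt 3 / 2 = r b * (sqrt 3 / 2)" using g_props(2)[OF t] gb by (simp add: w_gamma_def)
  then have "r b = 1" by simp
  then show False using r_lt1[OF b_in] by simp
qed

lemma a_Sp: "a \<in> Sp" and b_Sp: "b \<in> Sp"
  using a_in b_in g_ne_a g_ne_b unfolding Sp_def by auto
lemma Sp_sub: "Sp \<subseteq> S" unfolding Sp_def by auto

lemma alpha_Ks: "w_alpha \<in> Ks" using alpha_in_a a_Sp unfolding Ks_def by blast
lemma beta_Ks: "w_beta \<in> Ks" using beta_in_b b_Sp unfolding Ks_def by blast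
lemma Ks_sub: "Ks \<subseteq> K" unfolding Ks_def using piece_sub Sp_sub by blast
lemma closed_Ks: "closed Ks" unfolding Ks_def using closed_piece by (intro closed_UN) (auto simp: Sp_def)
lemma compact_Ks: "compact Ks" using closed_Ks Ks_sub boundedK bounded_subset compact_eq_bounded_closed by metis
lemma compact_P: "compact (P j)" unfolding P_def using compact_Ks sim_cont by (intro compact_continuous_image)
lemma closed_P: "closed (P j)" using compact_P by (rule compact_imp_closed)
lemma P_sub: "P j \<subseteq> phi j ` K" unfolding P_def using Ks_sub by blast

lemma notop_Ks: assumes "\<not> topc" shows "Ks = K"
proof -
  have "Sp = S" using assms by (auto simp: Sp_def)
  then show ?thesis unfolding Ks_def using K_eq by simp
qed

lemma T_disj: "topc \<Longrightarrow> phi g ` K \<inter> Ks = {}"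
proof -
  assume t: topc
  have "phi g ` K \<inter> phi l ` K = {}" if "l \<in> Sp" for l
  proof -
    have "l \<in> S" "l \<noteq> g" using that t unfolding Sp_def by auto
    then show ?thesis using g_props(3)[OF t] K_sub_Delta by blast
  qed
  then show ?thesis unfolding Ks_def by blast
qed

lemma K_T_Ks: assumes t: "topc" shows "K = phi g ` K \<union> Ks"
proof -
  have "S = insert g Sp" using g_props(1)[OF t] t by (auto simp: Sp_def)
  then have "(\<Union>l\<in>S. phi l ` K) = phi g ` K \<union> Ks" unfolding Ks_def by simp
  then show ?thesis using K_eq by simp
qed

lemma gamma_T: "topc \<Longrightarrow> w_gamma \<in> phi g ` K" using g_props by (metis image_eqI)

lemma gamma_notin_Ks: "w_gamma \<notin> Ks"
proof (cases topc)
  case True then show ?thesis using T_disj gamma_T by blast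
next
  case False then show ?thesis using notop_gamma Ks_sub by blast
qed

lemma partA:
  assumes t: topc and E: "connected E" "E \<subseteq> K" "w_gamma \<in> E" and x: "x \<in> E"
  shows "x = w_gamma"
proof -
  obtain B where B: "\<And>x. x \<in> K \<Longrightarrow> norm x \<le> B" using boundedK by (meson bounded_iff)
  let ?Q = "{(E, x). connected E \<and> E \<subseteq> K \<and> w_gamma \<in> E \<and> x \<in> E}"
  let ?f = "\<lambda>(E::(real\<times>real) set, x). dist x w_gamma"
  have "?f (E, x) \<le> 0"
  proof (rule sup_trick[where Q = ?Q and f = ?f and c = rho and B = "B + norm w_gamma"])
    show "0 \<le> rho" "rho < 1" using rho_pos rho_lt1 by auto
    show "(E, x) \<in> ?Q" using E x by auto
  next
    fix q assume q: "q \<in> ?Q"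
    then obtain E x where q': "q = (E, x)" "connected E" "E \<subseteq> K" "w_gamma \<in> E" "x \<in> E" by auto
    have "dist x w_gamma \<le> norm x + norm w_gamma" by (simp add: dist_norm norm_triangle_ineq4)
    moreover have "norm x \<le> B" using B q'(3,5) by blast
    ultimately show "?f q \<le> B + norm w_gamma" using q'(1) by simp
    have g: "g \<in> S" using g_props t by auto
    have "E \<subseteq> phi g ` K"
    proof -
      have "E \<subseteq> phi g ` K \<or> E \<subseteq> Ks"
        using conn_split[OF q'(2) closed_piece closed_Ks] q'(3) K_T_Ks[OF t] T_disj[OF t] by blast
      then show ?thesis using q'(4) gamma_notin_Ks by blast
    qed
    define E' where "E' = psi r d g ` E"
    have E': "connected E'" "E' \<subseteq> K" using psi_connected psi_img[OF g \<open>E \<subseteq> phi g ` K\<close>] q'(2)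
      unfolding E'_def by auto
    have "psi r d g w_gamma = w_gamma" using psi_phi[OF g, of w_gamma] g_props(2)[OF t] by simp
    then have gE': "w_gamma \<in> E'" using q'(4) unfolding E'_def by (metis image_eqI)
    obtain y where y: "y \<in> K" "x = phi g y" using \<open>E \<subseteq> phi g ` K\<close> q'(5) by blast
    have yE': "y \<in> E'" unfolding E'_def using y q'(5) psi_phi[OF g] by (metis image_eqI)
    have "dist x w_gamma = dist (phi g y) (phi g w_gamma)" using y g_props(2)[OF t] by simp
    also have "\<dots> = r g * dist y w_gamma" using phi_dist[OF g] by simp
    also have "\<dots> \<le> rho * dist y w_gamma" using rho_ge[OF g] by (intro mult_right_mono) auto
    finally show "\<exists>q'\<in>?Q. ?f q \<le> rho * ?f q'"
      using q'(1) E' gE' yE' by (intro bexI[of _ "(E', y)"]) auto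
  qed
  then show ?thesis by simp
qed

end


context G begin

lemma compact_piece2: "compact (phi j ` (phi g ` K))"
  by (rule compact_continuous_image[OF sim_cont compact_piece])

lemma sep:
  assumes E: "connected E" "E \<subseteq> K" and ns: "\<And>i. i \<in> S \<Longrightarrow> \<not> E \<subseteq> phi i ` K" and x: "x \<in> E"
  shows "\<exists>j\<in>Sp. x \<in> P j"
proof (cases topc)
  case False
  then have "Sp = S" "Ks = K" using notop_Ks by (auto simp: Sp_def)
  then show ?thesis using x E K_eq unfolding P_def by blast
next
  case t: True
  have g: "g \<in> S" using g_props t by auto
  have EKs: "E \<subseteq> Ks"
  proof -
    have "E \<subseteq> phi g ` K \<or> E \<subseteq> Ks"
      using conn_split[OF E(1) closed_piece closed_Ks] E(2) K_T_Ks[OF t] T_disj[OF t] by blast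
    then show ?thesis using ns[OF g] by blast
  qed
  then obtain j where j: "j \<in> Sp" "x \<in> phi j ` K" using x unfolding Ks_def by blast
  have jS: "j \<in> S" "j \<noteq> g" using j t unfolding Sp_def by auto
  show ?thesis
  proof (cases "x \<in> P j")
    case True then show ?thesis using j by blast
  next
    case xP: False
    define A where "A = phi j ` (phi g ` K)"
    define B where "B = P j \<union> (\<Union>k\<in>S - {j}. phi k ` K)"
    have KAB: "K = A \<union> B"
    proof -
      have "phi j ` K = A \<union> P j" unfolding A_def P_def using K_T_Ks[OF t] by blast
      moreover have "K = phi j ` K \<union> (\<Union>k\<in>S - {j}. phi k ` K)" using K_eq jS by blast
      ultimately show ?thesis unfolding B_def by blast
    qed
    have clA: "closed A" unfolding A_def using compact_piece2 compact_imp_closed by blast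
    have clB: "closed B" unfolding B_def using closed_P closed_piece by (intro closed_Un closed_UN) auto
    have AB: "A \<inter> B \<subseteq> {phi j w_gamma}"
    proof
      fix z assume z: "z \<in> A \<inter> B"
      then obtain tt where tt: "tt \<in> phi g ` K" "z = phi j tt" unfolding A_def by blast
      show "z \<in> {phi j w_gamma}"
      proof (cases "z \<in> P j")
        case True
        then obtain s where "s \<in> Ks" "z = phi j s" unfolding P_def by blast
        then have "s = tt" using tt phi_inj[OF jS(1)] by auto
        then show ?thesis using T_disj[OF t] tt \<open>s \<in> Ks\<close> by blast
      next
        case False
        then obtain k where k: "k \<in> S" "k \<noteq> j" "z \<in> phi k ` K" using z unfolding B_def by blast
        have zj: "z \<in> phi j ` K" using tt piece_sub[OF g] by blast
        obtain v where v: "v \<in> {w_alpha, w_beta, w_gamma}" "v \<in> K" "z = phi j v"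
          using link[OF jS(1) k(1) k(2)[symmetric] zj k(3)] by blast
        have "v = tt" using v tt phi_inj[OF jS(1)] by auto
        then have vT: "v \<in> phi g ` Delta" using tt K_sub_Delta by blast
        have "v \<noteq> w_alpha" using vT alpha_piece[OF g] g_ne_a[OF t] by blast
        moreover have "v \<noteq> w_beta" using vT beta_piece[OF g] g_ne_b[OF t] by blast
        ultimately show ?thesis using v by auto
      qed
    qed
    have xA: "x \<in> A" using j(2) xP KAB unfolding A_def P_def using K_T_Ks[OF t] by blast
    have notEA: "\<not> E \<subseteq> A" using ns[OF jS(1)] piece_sub[OF g] unfolding A_def by blast
    have pE: "phi j w_gamma \<in> E" "phi j w_gamma \<in> A"
    proof -
      have "A \<inter> B \<inter> E \<noteq> {}"
      proof
        assume "A \<inter> B \<inter> E = {}"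
        then have "E \<subseteq> A \<or> E \<subseteq> B" using conn_split[OF E(1) clA clB] E(2) KAB by blast
        then have "E \<subseteq> B" using notEA by blast
        then have "x \<in> A \<inter> B \<inter> E" using xA x by blast
        then show False using \<open>A \<inter> B \<inter> E = {}\<close> by blast
      qed
      then show "phi j w_gamma \<in> E" "phi j w_gamma \<in> A" using AB by blast+
    qed
    have cEA: "connected (E \<inter> A)" using cut_lemma[OF E(1) clA clB _ AB pE] E(2) KAB by blast
    have EAsub: "E \<inter> A \<subseteq> phi j ` K" unfolding A_def using piece_sub[OF g] by blast
    have "psi r d j x = w_gamma"
    proof (rule partA[OF t])
      show "connected (psi r d j ` (E \<inter> A))" using cEA by (rule psi_connected)
      show "psi r d j ` (E \<inter> A) \<subseteq> K" using psi_img[OF jS(1) EAsub] by blast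
      show "w_gamma \<in> psi r d j ` (E \<inter> A)" using pE psi_phi[OF jS(1)] by (metis IntI image_eqI)
      show "psi r d j x \<in> psi r d j ` (E \<inter> A)" using x xA by blast
    qed
    then have xg: "x = phi j w_gamma" using j(2) psi_phi[OF jS(1)] by auto
    have "x \<in> B" using xg pE AB KAB E(2) x
    proof -
      have "A \<inter> B \<inter> E \<noteq> {}"
      proof
        assume "A \<inter> B \<inter> E = {}"
        then have "E \<subseteq> A \<or> E \<subseteq> B" using conn_split[OF E(1) clA clB] E(2) KAB by blast
        then have "E \<subseteq> B" using notEA by blast
        then show False using \<open>A \<inter> B \<inter> E = {}\<close> xA x by blast
      qed
      then show ?thesis using AB xg by blast
    qed
    then obtain k where k: "k \<in> S" "k \<noteq> j" "x \<in> phi k ` K" using xP unfolding B_def by blast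
    have "k \<noteq> g"
    proof
      assume "k = g"
      then have "x \<in> phi g ` Delta \<inter> phi j ` Delta" using k(3) j(2) K_sub_Delta by blast
      then show False using g_props(3)[OF t jS(1)] jS(2) by blast
    qed
    then have kSp: "k \<in> Sp" using k unfolding Sp_def by auto
    obtain v where v: "v \<in> {w_alpha, w_beta, w_gamma}" "v \<in> K" "x = phi k v"
      using link[OF k(1) jS(1) k(2) k(3) j(2)] by blast
    have "v \<noteq> w_gamma" using v xg vert_distinct[OF k(1) jS(1) k(2), of w_gamma] by auto
    then have "v \<in> Ks" using v alpha_Ks beta_Ks by auto
    then have "x \<in> P k" using v unfolding P_def by blast
    then show ?thesis using kSp by blast
  qed
qed

end


context G begin

lemma P_base:
  assumes j: "j \<in> Sp" and x: "x \<in> P j" and k: "k \<in> S" "k \<noteq> j" "x \<in> phi k ` K"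
  shows "snd x = base j"
proof -
  have jS: "j \<in> S" using j Sp_sub by auto
  have xj: "x \<in> phi j ` K" using x P_sub by auto
  obtain v where v: "v \<in> {w_alpha, w_beta, w_gamma}" "v \<in> K" "x = phi j v"
    using link[OF jS k(1) k(2)[symmetric] xj k(3)] by blast
  obtain s where s: "s \<in> Ks" "x = phi j s" using x unfolding P_def by auto
  have "v = s" using v s phi_inj[OF jS] by auto
  then have "v \<noteq> w_gamma" using s gamma_notin_Ks by auto
  then show ?thesis using v snd_alpha snd_beta by auto
qed

lemma P_link:
  assumes j: "j \<in> Sp" "x \<in> P j" and k: "k \<in> Sp" "x \<in> P k" and jk: "j \<noteq> k"
  shows "base j = base k"
proof -
  have "snd x = base j" using P_base[OF j] k Sp_sub P_sub jk by blast
  moreover have "snd x = base k" using P_base[OF k] j Sp_sub P_sub jk by blast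
  ultimately show ?thesis by simp
qed

lemma base_const:
  assumes E: "connected E" "E \<subseteq> K" and ns: "\<And>i. i \<in> S \<Longrightarrow> \<not> E \<subseteq> phi i ` K"
  shows "\<exists>c. \<forall>x\<in>E. \<exists>j\<in>Sp. x \<in> P j \<and> base j = c"
proof (cases "E = {}")
  case True then show ?thesis by auto
next
  case False
  then obtain x0 where x0: "x0 \<in> E" by auto
  obtain j0 where j0: "j0 \<in> Sp" "x0 \<in> P j0" using sep[OF E ns x0] by blast
  define c where "c = base j0"
  define U1 where "U1 = (\<Union>j\<in>{j\<in>Sp. base j = c}. P j)"
  define U2 where "U2 = (\<Union>j\<in>{j\<in>Sp. base j \<noteq> c}. P j)"
  have fin: "finite Sp" using Sp_sub finite_subset by blast
  have cl: "closed U1" "closed U2" unfolding U1_def U2_def using closed_P fin by (auto intro!: closed_UN)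
  have cov: "E \<subseteq> U1 \<union> U2" using sep[OF E ns] unfolding U1_def U2_def by blast
  have dis: "U1 \<inter> U2 = {}" unfolding U1_def U2_def using P_link by fastforce
  have "x0 \<in> U1" unfolding U1_def using j0 c_def by blast
  then have "E \<subseteq> U1" using conn_split[OF E(1) cl cov] dis x0 by blast
  then show ?thesis unfolding U1_def by blast
qed

lemma local_piece:
  assumes E: "compact E" "connected E" "E \<subseteq> K" and ns: "\<And>i. i \<in> S \<Longrightarrow> \<not> E \<subseteq> phi i ` K"
    and x: "x \<in> E" and j: "j \<in> Sp" "x \<in> P j"
  shows "\<exists>y D. x = phi j y \<and> connected D \<and> D \<subseteq> K \<and> y \<in> D \<and> (w_alpha \<in> D \<or> w_beta \<in> D)"
proof -
  have jS: "j \<in> S" using j Sp_sub by auto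
  have xj: "x \<in> phi j ` K" using j P_sub by auto
  obtain D0 where D0: "connected D0" "x \<in> D0" "D0 \<subseteq> E \<inter> phi j ` K" "D0 \<inter> closure (E - phi j ` K) \<noteq> {}"
    using bb_lemma[OF E(1) E(2) closed_piece _ xj] x ns[OF jS] by blast
  define R where "R = (\<Union>k\<in>S - {j}. phi k ` K)"
  have clR: "closed R" unfolding R_def using closed_piece by (intro closed_UN) auto
  have "E - phi j ` K \<subseteq> R" unfolding R_def using E(3) K_eq by blast
  then have "closure (E - phi j ` K) \<subseteq> R" using clR closure_minimal by blast
  then obtain p where p: "p \<in> D0" "p \<in> R" using D0(4) by blast
  then obtain k where k: "k \<in> S" "k \<noteq> j" "p \<in> phi k ` K" unfolding R_def by blast
  have pj: "p \<in> phi j ` K" using p D0(3) by blast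
  obtain v where v: "v \<in> {w_alpha, w_beta, w_gamma}" "v \<in> K" "p = phi j v"
    using link[OF jS k(1) k(2)[symmetric] pj k(3)] by blast
  define D where "D = psi r d j ` D0"
  have D0sub: "D0 \<subseteq> phi j ` K" using D0(3) by blast
  have D: "connected D" "D \<subseteq> K" unfolding D_def using psi_connected[OF D0(1)] psi_img[OF jS D0sub] by auto
  have vD: "v \<in> D" unfolding D_def using p(1) v(3) psi_phi[OF jS] by (metis image_eqI)
  define y where "y = psi r d j x"
  have yD: "y \<in> D" unfolding D_def y_def using D0(2) by blast
  have xy: "x = phi j y" unfolding y_def using xj psi_phi[OF jS] by auto
  have "v \<noteq> w_gamma"
  proof
    assume vg: "v = w_gamma"
    then have t: topc using v(2) notop_gamma by blast
    have "y = w_gamma" using partA[OF t D] vD vg yD by blast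
    then have "x = phi j w_gamma" using xy by simp
    moreover obtain s where "s \<in> Ks" "x = phi j s" using j(2) unfolding P_def by auto
    ultimately have "s = w_gamma" using phi_inj[OF jS] by auto
    then show False using \<open>s \<in> Ks\<close> gamma_notin_Ks by simp
  qed
  then have "w_alpha \<in> D \<or> w_beta \<in> D" using v vD by auto
  then show ?thesis using xy D yD by blast
qed

end


context G begin

lemma clos_props:
  assumes "connected E" "E \<subseteq> K"
  shows "compact (closure E)" "connected (closure E)" "closure E \<subseteq> K" "E \<subseteq> closure E"
proof -
  show "closure E \<subseteq> K" using assms closedK closure_minimal by blast
  then show "compact (closure E)" using boundedK bounded_subset compact_eq_bounded_closed by blast
  show "connected (closure E)" using assms connected_imp_connected_closure by blast
  show "E \<subseteq> closure E" by (rule closure_subset)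
qed

lemma K_bound: obtains B where "\<And>x. x \<in> K \<Longrightarrow> norm x \<le> B"
  using boundedK by (meson bounded_iff)

lemma snd_le_norm: "\<bar>snd (x::real\<times>real)\<bar> \<le> norm x"
  using norm_snd_le[of "snd x" "fst x"] by simp

lemma snd_K_nonneg: "x \<in> K \<Longrightarrow> 0 \<le> snd x" using K_sub_Delta by (auto simp: Delta_eq)

lemma fix_vertex:
  assumes i: "i \<in> S" and v: "v \<in> {w_alpha, w_beta}" and vi: "v \<in> phi i ` K"
  shows "phi i v = v" "base i = 0"
proof -
  show pv: "phi i v = v"
  proof (cases "v = w_alpha")
    case True then show ?thesis using alpha_K_piece[OF i] vi a_fix by auto
  next
    case False then have "v = w_beta" using v by auto
    then show ?thesis using beta_K_piece[OF i] vi b_fix by auto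
  qed
  have "snd v = 0" using v by (auto simp: w_alpha_def w_beta_def)
  then show "base i = 0" using pv snd_alpha[of i] snd_beta[of i] v by auto
qed

lemma partB:
  assumes E: "connected E" "E \<subseteq> K" "w_alpha \<in> E \<or> w_beta \<in> E" and x: "x \<in> E"
  shows "snd x = 0"
proof -
  obtain B where B: "\<And>x. x \<in> K \<Longrightarrow> norm x \<le> B" using K_bound by blast
  let ?Q = "{(E, x). connected E \<and> E \<subseteq> K \<and> (w_alpha \<in> E \<or> w_beta \<in> E) \<and> x \<in> E}"
  let ?f = "\<lambda>(E::(real\<times>real) set, x::real\<times>real). snd x"
  have "?f (E, x) \<le> 0"
  proof (rule sup_trick[where Q = ?Q and f = ?f and c = rho and B = B])
    show "0 \<le> rho" "rho < 1" using rho_pos rho_lt1 by auto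
    show "(E, x) \<in> ?Q" using E x by auto
  next
    fix q assume q: "q \<in> ?Q"
    then obtain E x where q': "q = (E, x)" "connected E" "E \<subseteq> K" "w_alpha \<in> E \<or> w_beta \<in> E" "x \<in> E" by auto
    have "snd x \<le> norm x" using snd_le_norm[of x] by linarith
    then show "?f q \<le> B" using q' B[of x] by auto
    define E' where "E' = closure E"
    have E': "compact E'" "connected E'" "E' \<subseteq> K" "E \<subseteq> E'" using clos_props[OF q'(2,3)] unfolding E'_def by auto
    obtain v where v: "v \<in> {w_alpha, w_beta}" "v \<in> E'" using q'(4) E'(4) by blast
    have xE': "x \<in> E'" using q'(5) E'(4) by blast
    show "\<exists>q'\<in>?Q. ?f q \<le> rho * ?f q'"
    proof (cases "\<exists>i\<in>S. E' \<subseteq> phi i ` K")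
      case True
      then obtain i where i: "i \<in> S" "E' \<subseteq> phi i ` K" by blast
      have fv: "phi i v = v" "base i = 0" using fix_vertex[OF i(1) v(1)] v(2) i(2) by auto
      define D where "D = psi r d i ` E'"
      have D: "connected D" "D \<subseteq> K" unfolding D_def using psi_connected[OF E'(2)] psi_img[OF i] by auto
      have vD: "v \<in> D" unfolding D_def using v(2) fv(1) psi_phi[OF i(1), of v] by (metis image_eqI)
      define y where "y = psi r d i x"
      have yD: "y \<in> D" unfolding D_def y_def using xE' by blast
      have xy: "x = phi i y" unfolding y_def using xE' i(2) psi_phi[OF i(1)] by auto
      have "snd x = r i * snd y" using xy snd_phi[of i y] fv by simp
      also have "\<dots> \<le> rho * snd y" using rho_ge[OF i(1)] snd_K_nonneg[of y] yD D(2)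
        by (intro mult_right_mono) auto
      finally show ?thesis using q'(1) D vD yD v(1) by (intro bexI[of _ "(D, y)"]) auto
    next
      case False
      then have ns: "\<And>i. i \<in> S \<Longrightarrow> \<not> E' \<subseteq> phi i ` K" by blast
      obtain c where c: "\<forall>x\<in>E'. \<exists>j\<in>Sp. x \<in> P j \<and> base j = c" using base_const[OF E'(2,3) ns] by blast
      obtain j' where j': "j' \<in> Sp" "v \<in> P j'" "base j' = c" using c v(2) by blast
      have "base j' \<le> snd v" using base_le_snd[of j' v] j' Sp_sub P_sub by blast
      moreover have "snd v = 0" using v by (auto simp: w_alpha_def w_beta_def)
      ultimately have c0: "c = 0" using base_nonneg[of j'] j' Sp_sub by force
      obtain j where j: "j \<in> Sp" "x \<in> P j" "base j = c" using c xE' by blast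
      obtain y D where yD: "x = phi j y" "connected D" "D \<subseteq> K" "y \<in> D" "w_alpha \<in> D \<or> w_beta \<in> D"
        using local_piece[OF E'(1,2,3) ns xE' j(1,2)] by blast
      have jS: "j \<in> S" using j Sp_sub by auto
      have "snd x = r j * snd y" using yD(1) snd_phi[of j y] j(3) c0 by simp
      also have "\<dots> \<le> rho * snd y" using rho_ge[OF jS] snd_K_nonneg[of y] yD
        by (intro mult_right_mono) auto
      finally show ?thesis using q'(1) yD by (intro bexI[of _ "(D, y)"]) auto
    qed
  qed
  then show ?thesis using snd_K_nonneg[of x] E(2) x by auto
qed

lemma partH:
  assumes E: "connected E" "E \<subseteq> K" and x: "x \<in> E" and y: "y \<in> E"
  shows "snd x = snd y"
proof -
  obtain B where B: "\<And>x. x \<in> K \<Longrightarrow> norm x \<le> B" using K_bound by blast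
  let ?Q = "{(E, x, y). connected E \<and> E \<subseteq> K \<and> x \<in> E \<and> y \<in> E}"
  let ?f = "\<lambda>(E::(real\<times>real) set, x::real\<times>real, y::real\<times>real). \<bar>snd x - snd y\<bar>"
  have "?f (E, x, y) \<le> 0"
  proof (rule sup_trick[where Q = ?Q and f = ?f and c = rho and B = "2 * B"])
    show "0 \<le> rho" "rho < 1" using rho_pos rho_lt1 by auto
    show "(E, x, y) \<in> ?Q" using E x y by auto
  next
    fix q assume q: "q \<in> ?Q"
    then obtain E x y where q': "q = (E, x, y)" "connected E" "E \<subseteq> K" "x \<in> E" "y \<in> E" by auto
    have "\<bar>snd x - snd y\<bar> \<le> norm x + norm y" using snd_le_norm[of x] snd_le_norm[of y] by linarith
    moreover have "norm x \<le> B" "norm y \<le> B" using B q'(3,4,5) by blast+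
    ultimately show "?f q \<le> 2 * B" using q'(1) by simp
    define E' where "E' = closure E"
    have E': "compact E'" "connected E'" "E' \<subseteq> K" "E \<subseteq> E'" using clos_props[OF q'(2,3)] unfolding E'_def by auto
    have xE': "x \<in> E'" "y \<in> E'" using q'(4,5) E'(4) by auto
    show "\<exists>q'\<in>?Q. ?f q \<le> rho * ?f q'"
    proof (cases "\<exists>i\<in>S. E' \<subseteq> phi i ` K")
      case True
      then obtain i where i: "i \<in> S" "E' \<subseteq> phi i ` K" by blast
      define D where "D = psi r d i ` E'"
      have D: "connected D" "D \<subseteq> K" unfolding D_def using psi_connected[OF E'(2)] psi_img[OF i] by auto
      define x' where "x' = psi r d i x"
      define y' where "y' = psi r d i y"
      have xyD: "x' \<in> D" "y' \<in> D" unfolding D_def x'_def y'_def using xE' by auto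
      have xy: "x = phi i x'" "y = phi i y'" unfolding x'_def y'_def using xE' i(2) psi_phi[OF i(1)] by auto
      have "\<bar>snd x - snd y\<bar> = r i * \<bar>snd x' - snd y'\<bar>"
        using xy snd_phi[of i x'] snd_phi[of i y'] r_pos[OF i(1)]
        by (simp add: abs_mult flip: right_diff_distrib)
      also have "\<dots> \<le> rho * \<bar>snd x' - snd y'\<bar>" using rho_ge[OF i(1)] by (intro mult_right_mono) auto
      finally show ?thesis using q'(1) D xyD by (intro bexI[of _ "(D, x', y')"]) auto
    next
      case False
      then have ns: "\<And>i. i \<in> S \<Longrightarrow> \<not> E' \<subseteq> phi i ` K" by blast
      obtain c where c: "\<forall>x\<in>E'. \<exists>j\<in>Sp. x \<in> P j \<and> base j = c" using base_const[OF E'(2,3) ns] by blast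
      have lev: "snd z = c" if z: "z \<in> E'" for z
      proof -
        obtain j where j: "j \<in> Sp" "z \<in> P j" "base j = c" using c z by blast
        obtain y D where yD: "z = phi j y" "connected D" "D \<subseteq> K" "y \<in> D" "w_alpha \<in> D \<or> w_beta \<in> D"
          using local_piece[OF E'(1,2,3) ns z j(1,2)] by blast
        have "snd y = 0" using partB[OF yD(2,3,5,4)] .
        then show ?thesis using yD(1) snd_phi[of j y] j(3) by simp
      qed
      have "?f q = 0" using q'(1) lev xE' by simp
      then show ?thesis using q q'(1) by (intro bexI[of _ q]) auto
    qed
  qed
  then show ?thesis by simp
qed

end


context G begin

lemma comp_segment:
  assumes x: "x \<in> K" and y: "y \<in> connected_component_set K x" and z: "z \<in> connected_component_set K x"
    and yz: "y \<noteq> z"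
  shows "\<exists>p q. p \<noteq> q \<and> connected_component_set K x = closed_segment p q"
proof -
  define C where "C = connected_component_set K x"
  have C: "connected C" "C \<subseteq> K" "closed C" unfolding C_def
    using connected_connected_component connected_component_subset closed_connected_component closedK by auto
  have cC: "compact C" using C boundedK bounded_subset compact_eq_bounded_closed by blast
  define c where "c = snd y"
  have h: "\<And>w. w \<in> C \<Longrightarrow> snd w = c" unfolding c_def using partH[OF C(1,2)] y C_def by blast
  have "connected (fst ` C)" "compact (fst ` C)" using C cC
    by (auto intro!: connected_continuous_image compact_continuous_image continuous_intros)
  then obtain m M where mM: "fst ` C = {m..M}" using connected_compact_interval_1 by blast
  have Ceq: "C = (\<lambda>t. (t, c)) ` (fst ` C)"
  proof
    show "C \<subseteq> (\<lambda>t. (t, c)) ` fst ` C"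
    proof
      fix w assume "w \<in> C"
      then have "w = (fst w, c)" using h by (simp add: prod_eq_iff)
      then show "w \<in> (\<lambda>t. (t, c)) ` fst ` C" using \<open>w \<in> C\<close> by blast
    qed
    show "(\<lambda>t. (t, c)) ` fst ` C \<subseteq> C"
    proof
      fix w assume "w \<in> (\<lambda>t. (t, c)) ` fst ` C"
      then obtain e where e: "e \<in> C" "w = (fst e, c)" by blast
      then have "w = e" using h by (simp add: prod_eq_iff)
      then show "w \<in> C" using e by simp
    qed
  qed
  have "fst y \<noteq> fst z" using yz h y z C_def by (auto simp: prod_eq_iff)
  moreover have "fst y \<in> {m..M}" "fst z \<in> {m..M}" using mM y z C_def by blast+
  ultimately have mlM: "m < M" by auto
  have "C = closed_segment (m, c) (M, c)"
    unfolding hseg using Ceq mM mlM by (simp add: closed_segment_eq_real_ivl)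
  moreover have "(m, c) \<noteq> (M, c)" using mlM by simp
  ultimately show ?thesis unfolding C_def by blast
qed

lemma seg_transfer:
  assumes i: "i \<in> S" and seg: "closed_segment (phi i w_alpha) (phi i w_beta) \<subseteq> K"
  shows "closed_segment w_alpha w_beta \<subseteq> K"
proof
  fix w assume w: "w \<in> closed_segment w_alpha w_beta"
  have wD: "w \<in> Delta" using w verts_Delta convex_Delta closed_segment_subset by blast
  have sw: "snd w = 0" using w unfolding seg_alpha_beta by auto
  have "phi i w \<in> K" using seg w sim_seg by blast
  then obtain k where k: "k \<in> S" "phi i w \<in> phi k ` K" using K_eq by blast
  show "w \<in> K"
  proof (cases "k = i")
    case True
    then obtain w' where "w' \<in> K" "phi i w = phi i w'" using k by blast
    then show ?thesis using phi_inj[OF i] by metis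
  next
    case False
    have "phi i w \<in> phi i ` Delta \<inter> phi k ` Delta" using wD k K_sub_Delta by blast
    then obtain v where v: "v \<in> {w_alpha, w_beta, w_gamma}" "phi i w = phi i v"
      using overlap[OF i k(1)] False by blast
    then have "w = v" using phi_inj[OF i] by auto
    moreover have "w \<noteq> w_gamma" using sw by (auto simp: w_gamma_def)
    ultimately show ?thesis using v wa wb by auto
  qed
qed

lemma Y2:
  assumes ns: "\<not> closed_segment w_alpha w_beta \<subseteq> K"
    and E: "connected E" "E \<subseteq> K" and v: "v \<in> {w_alpha, w_beta}" "v \<in> E" and x: "x \<in> E"
  shows "x = v"
proof -
  obtain B where B: "\<And>x. x \<in> K \<Longrightarrow> norm x \<le> B" using K_bound by blast
  obtain iv where iv: "iv \<in> S" "phi iv v = v" "v \<in> phi iv ` K"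
    using v a_in b_in a_fix b_fix alpha_in_a beta_in_b by auto
  let ?Q = "{(E, x). connected E \<and> E \<subseteq> K \<and> v \<in> E \<and> x \<in> E}"
  let ?f = "\<lambda>(E::(real\<times>real) set, x::real\<times>real). dist x v"
  have "?f (E, x) \<le> 0"
  proof (rule sup_trick[where Q = ?Q and f = ?f and c = rho and B = "B + norm v"])
    show "0 \<le> rho" "rho < 1" using rho_pos rho_lt1 by auto
    show "(E, x) \<in> ?Q" using E x v by auto
  next
    fix q assume q: "q \<in> ?Q"
    then obtain E x where q': "q = (E, x)" "connected E" "E \<subseteq> K" "v \<in> E" "x \<in> E" by auto
    have "dist x v \<le> norm x + norm v" by (simp add: dist_norm norm_triangle_ineq4)
    moreover have "norm x \<le> B" using B q'(3,5) by blast
    ultimately show "?f q \<le> B + norm v" using q'(1) by simp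
    define E' where "E' = closure E"
    have E': "compact E'" "connected E'" "E' \<subseteq> K" "E \<subseteq> E'" using clos_props[OF q'(2,3)] unfolding E'_def by auto
    have xE': "x \<in> E'" "v \<in> E'" using q'(4,5) E'(4) by auto
    show "\<exists>q'\<in>?Q. ?f q \<le> rho * ?f q'"
    proof (cases "\<exists>i\<in>S. E' \<subseteq> phi i ` K")
      case True
      then obtain i where i: "i \<in> S" "E' \<subseteq> phi i ` K" by blast
      have fv: "phi i v = v" using fix_vertex[OF i(1) v(1)] xE' i(2) by auto
      define D where "D = psi r d i ` E'"
      have D: "connected D" "D \<subseteq> K" unfolding D_def using psi_connected[OF E'(2)] psi_img[OF i] by auto
      have vD: "v \<in> D" unfolding D_def using xE'(2) fv psi_phi[OF i(1), of v] by (metis image_eqI)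
      define y where "y = psi r d i x"
      have yD: "y \<in> D" unfolding D_def y_def using xE' by blast
      have xy: "x = phi i y" unfolding y_def using xE' i(2) psi_phi[OF i(1)] by auto
      have "dist x v = dist (phi i y) (phi i v)" using xy fv by simp
      also have "\<dots> = r i * dist y v" using phi_dist[OF i(1)] by simp
      also have "\<dots> \<le> rho * dist y v" using rho_ge[OF i(1)] by (intro mult_right_mono) auto
      finally show ?thesis using q'(1) D vD yD by (intro bexI[of _ "(D, y)"]) auto
    next
      case False
      then have nsub: "\<not> E' \<subseteq> phi iv ` K" using iv by blast
      define R where "R = (\<Union>k\<in>S - {iv}. phi k ` K)"
      have clR: "closed R" unfolding R_def using closed_piece by (intro closed_UN) auto
      have cov: "E' \<subseteq> phi iv ` K \<union> R" unfolding R_def using E'(3) K_eq by blast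
      have "phi iv ` K \<inter> R \<inter> E' \<noteq> {}"
      proof
        assume "phi iv ` K \<inter> R \<inter> E' = {}"
        then have "E' \<subseteq> phi iv ` K \<or> E' \<subseteq> R" using conn_split[OF E'(2) closed_piece clR cov] by blast
        then have "E' \<subseteq> R" using nsub by blast
        then show False using \<open>phi iv ` K \<inter> R \<inter> E' = {}\<close> xE'(2) iv(3) by blast
      qed
      then obtain p k where p: "p \<in> E'" "p \<in> phi iv ` K" "k \<in> S" "k \<noteq> iv" "p \<in> phi k ` K"
        unfolding R_def by blast
      obtain u where u: "u \<in> {w_alpha, w_beta, w_gamma}" "u \<in> K" "p = phi iv u"
        using link[OF iv(1) p(3) p(4)[symmetric] p(2) p(5)] by blast
      have hE: "\<And>z. z \<in> E' \<Longrightarrow> snd z = 0" using partB[OF E'(2,3)] xE'(2) v(1) by blast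
      have "u \<noteq> w_gamma"
      proof
        assume "u = w_gamma"
        then have "snd p = base iv + r iv * (sqrt 3 / 2)" using u(3) snd_gamma by simp
        moreover have "0 < r iv * (sqrt 3 / 2)" using r_pos[OF iv(1)] by simp
        ultimately show False using hE[OF p(1)] base_nonneg[OF iv(1)] by linarith
      qed
      moreover have "u \<noteq> v"
      proof
        assume "u = v"
        then have "v \<in> phi k ` K" using p(5) u(3) iv(2) by simp
        then have "k = iv" using v(1) alpha_K_piece beta_K_piece p(3) iv v a_in b_in a_fix b_fix
          by (metis alpha_K_piece beta_K_piece insert_iff singletonD)
        then show False using p(4) by simp
      qed
      ultimately have "{v, u} = {w_alpha, w_beta}" using u(1) v(1) by auto
      have "closed_segment v p \<subseteq> E'" using line_seg[OF E'(2) hE] xE'(2) p(1) by blast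
      then have "closed_segment (phi iv v) (phi iv u) \<subseteq> K" using iv(2) u(3) E'(3) by simp
      then have "closed_segment (phi iv w_alpha) (phi iv w_beta) \<subseteq> K"
        using \<open>{v, u} = {w_alpha, w_beta}\<close> by (metis closed_segment_commute doubleton_eq_iff)
      then have False using seg_transfer[OF iv(1)] ns by blast
      then show ?thesis by blast
    qed
  qed
  then show ?thesis by simp
qed

lemma totdisc:
  assumes ns: "\<not> closed_segment w_alpha w_beta \<subseteq> K"
    and E: "connected E" "E \<subseteq> K" and x: "x \<in> E" and y: "y \<in> E"
  shows "x = y"
proof -
  obtain B where B: "\<And>x. x \<in> K \<Longrightarrow> norm x \<le> B" using K_bound by blast
  let ?Q = "{(E, x, y). connected E \<and> E \<subseteq> K \<and> x \<in> E \<and> y \<in> E}"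
  let ?f = "\<lambda>(E::(real\<times>real) set, x::real\<times>real, y::real\<times>real). dist x y"
  have "?f (E, x, y) \<le> 0"
  proof (rule sup_trick[where Q = ?Q and f = ?f and c = rho and B = "2 * B"])
    show "0 \<le> rho" "rho < 1" using rho_pos rho_lt1 by auto
    show "(E, x, y) \<in> ?Q" using E x y by auto
  next
    fix q assume q: "q \<in> ?Q"
    then obtain E x y where q': "q = (E, x, y)" "connected E" "E \<subseteq> K" "x \<in> E" "y \<in> E" by auto
    have "dist x y \<le> norm x + norm y" by (simp add: dist_norm norm_triangle_ineq4)
    moreover have "norm x \<le> B" "norm y \<le> B" using B q'(3,4,5) by blast+
    ultimately show "?f q \<le> 2 * B" using q'(1) by simp
    define E' where "E' = closure E"
    have E': "compact E'" "connected E'" "E' \<subseteq> K" "E \<subseteq> E'" using clos_props[OF q'(2,3)] unfolding E'_def by auto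
    have xE': "x \<in> E'" "y \<in> E'" using q'(4,5) E'(4) by auto
    show "\<exists>q'\<in>?Q. ?f q \<le> rho * ?f q'"
    proof (cases "\<exists>i\<in>S. E' \<subseteq> phi i ` K")
      case True
      then obtain i where i: "i \<in> S" "E' \<subseteq> phi i ` K" by blast
      define D where "D = psi r d i ` E'"
      have D: "connected D" "D \<subseteq> K" unfolding D_def using psi_connected[OF E'(2)] psi_img[OF i] by auto
      define x' where "x' = psi r d i x"
      define y' where "y' = psi r d i y"
      have xyD: "x' \<in> D" "y' \<in> D" unfolding D_def x'_def y'_def using xE' by auto
      have xy: "x = phi i x'" "y = phi i y'" unfolding x'_def y'_def using xE' i(2) psi_phi[OF i(1)] by auto
      have "dist x y = r i * dist x' y'" using xy phi_dist[OF i(1)] by simp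
      also have "\<dots> \<le> rho * dist x' y'" using rho_ge[OF i(1)] by (intro mult_right_mono) auto
      finally show ?thesis using q'(1) D xyD by (intro bexI[of _ "(D, x', y')"]) auto
    next
      case False
      then have nsi: "\<And>i. i \<in> S \<Longrightarrow> \<not> E' \<subseteq> phi i ` K" by blast
      define F0 where "F0 = (\<Union>j\<in>S. {phi j w_alpha, phi j w_beta})"
      have finF0: "finite F0" unfolding F0_def by simp
      have "E' \<subseteq> F0"
      proof
        fix z assume z: "z \<in> E'"
        obtain j where j: "j \<in> Sp" "z \<in> P j" using sep[OF E'(2,3) nsi z] by blast
        obtain w D where wD: "z = phi j w" "connected D" "D \<subseteq> K" "w \<in> D" "w_alpha \<in> D \<or> w_beta \<in> D"
          using local_piece[OF E'(1,2,3) nsi z j] by blast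
        have "w = w_alpha \<or> w = w_beta" using wD Y2[OF ns wD(2,3)] by blast
        then show "z \<in> F0" unfolding F0_def using wD(1) j(1) Sp_sub by blast
      qed
      then have "finite E'" using finF0 finite_subset by blast
      then obtain e where "E' = {e}" using connected_finite_iff_sing[OF E'(2)] xE' by blast
      then have "?f q = 0" using q'(1) xE' by simp
      then show ?thesis using q q'(1) by (intro bexI[of _ q]) auto
    qed
  qed
  then show ?thesis by simp
qed

end


context G begin

definition CH where "CH = {xs. horizontal_chain r d xs \<and> set xs \<subseteq> S \<and> hd xs = a}"

lemma CH_finite: "finite CH"
proof -
  have "CH \<subseteq> {xs. set xs \<subseteq> S \<and> distinct xs}" unfolding CH_def horizontal_chain_def by auto
  then show ?thesis using finite_subset_distinct[OF S_fin] finite_subset by blast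
qed

lemma CH_a: "[a] \<in> CH" unfolding CH_def horizontal_chain_def using a_in by auto

lemma chain_pos:
  assumes xs: "xs \<in> CH"
  shows "m < length xs \<Longrightarrow> snd (phi (xs!m) w_alpha) = 0 \<and> (\<forall>m'\<le>m. fst (phi (xs!m') w_alpha) \<le> fst (phi (xs!m) w_alpha))"
proof (induction m)
  case 0
  have "xs \<noteq> []" using xs unfolding CH_def horizontal_chain_def by auto
  then have "xs!0 = a" using xs unfolding CH_def by (simp add: hd_conv_nth)
  then show ?case using a_fix by (simp add: w_alpha_def)
next
  case (Suc m)
  have m: "m < length xs" using Suc.prems by simp
  have xm: "xs!m \<in> S" using xs m unfolding CH_def using nth_mem by blast
  have lk: "phi (xs!m) w_beta = phi (xs!Suc m) w_alpha" using xs Suc.prems unfolding CH_def horizontal_chain_def by blast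
  have e: "phi (xs!Suc m) w_alpha = phi (xs!m) w_alpha + (r (xs!m), 0)" using lk phi_beta by simp
  have IH: "snd (phi (xs!m) w_alpha) = 0" "\<forall>m'\<le>m. fst (phi (xs!m') w_alpha) \<le> fst (phi (xs!m) w_alpha)"
    using Suc.IH m by auto
  have "fst (phi (xs!m) w_alpha) \<le> fst (phi (xs!Suc m) w_alpha)" using e r_pos[OF xm] by simp
  then have "\<forall>m'\<le>Suc m. fst (phi (xs!m') w_alpha) \<le> fst (phi (xs!Suc m) w_alpha)"
    using IH(2) by (metis le_Suc_eq order_trans order_refl)
  moreover have "snd (phi (xs!Suc m) w_alpha) = 0" using e IH(1) by simp
  ultimately show ?case by blast
qed

lemma chain_block:
  assumes seg: "closed_segment w_alpha w_beta \<subseteq> K"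
  shows "\<exists>I. horizontal_block N r d I \<and> a \<in> I \<and> b \<in> I"
proof -
  define n where "n = Max (length ` CH)"
  have "n \<in> length ` CH" unfolding n_def using CH_finite CH_a by (intro Max_in) auto
  then obtain xs where xs: "xs \<in> CH" "length xs = n" by auto
  have maxl: "\<And>ys. ys \<in> CH \<Longrightarrow> length ys \<le> length xs" unfolding xs(2) n_def using CH_finite by simp
  have xs_ne: "xs \<noteq> []" and dxs: "distinct xs" and sxs: "set xs \<subseteq> S" and hxs: "hd xs = a"
    and lks: "\<And>j. Suc j < length xs \<Longrightarrow> phi (xs!j) w_beta = phi (xs!Suc j) w_alpha"
    using xs(1) unfolding CH_def horizontal_chain_def by auto
  define L where "L = length xs"
  have L1: "L \<ge> 1" using xs_ne unfolding L_def by (cases xs) auto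
  define i where "i = xs!(L - 1)"
  have Llt: "L - 1 < length xs" using L1 L_def by simp
  have ixs: "i \<in> set xs" unfolding i_def using Llt by simp
  have iS: "i \<in> S" using ixs sxs by blast
  have posi: "snd (phi i w_alpha) = 0" "\<And>m. m < L \<Longrightarrow> fst (phi (xs!m) w_alpha) \<le> fst (phi i w_alpha)"
    using chain_pos[OF xs(1), of "L - 1"] L1 unfolding L_def i_def by auto
  define q where "q = phi i w_beta"
  have q_eq: "q = w_beta"
  proof (rule ccontr)
    assume qb: "q \<noteq> w_beta"
    have fq: "fst q = fst (phi i w_alpha) + r i" and sq: "snd q = 0"
      unfolding q_def using phi_beta[of i] posi(1) by auto
    have "q \<in> Delta" unfolding q_def using phi_beta_Delta[OF iS] .
    then have "0 \<le> sqrt 3 * fst q" "0 \<le> sqrt 3 * (1 - fst q)" using sq unfolding Delta_eq by auto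
    then have fq01: "0 \<le> fst q" "fst q \<le> 1" by (simp_all add: zero_le_mult_iff)
    have "fst q \<noteq> 1" using qb sq by (auto simp: w_beta_def prod_eq_iff)
    then have fq1: "fst q < 1" using fq01 by simp
    have qseg: "q \<in> closed_segment w_alpha w_beta" unfolding seg_alpha_beta using fq01 sq
      by (auto simp: image_iff prod_eq_iff)
    have bseg: "w_beta \<in> closed_segment w_alpha w_beta" by simp
    define R where "R = (\<Union>k\<in>S - {i}. phi k ` K)"
    have clR: "closed R" unfolding R_def using closed_piece by (intro closed_UN) auto
    have "open_segment q w_beta \<subseteq> R"
    proof
      fix z assume z: "z \<in> open_segment q w_beta"
      have zs: "z \<in> closed_segment w_alpha w_beta"
        using z qseg bseg closed_segment_subset[of q "closed_segment w_alpha w_beta" w_beta]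
        by (auto simp: open_segment_def)
      then have zK: "z \<in> K" using seg by blast
      have sz: "snd z = 0" using zs unfolding seg_alpha_beta by auto
      obtain u where u: "0 < u" "u < 1" "z = (1 - u) *\<^sub>R q + u *\<^sub>R w_beta"
        using z qb by (auto simp: in_segment)
      have "fst z = (1 - u) * fst q + u * fst w_beta" using u(3) by simp
      then have "fst z = fst q + u * (1 - fst q)" by (simp add: w_beta_def algebra_simps)
      moreover have "0 < u * (1 - fst q)" using u fq1 by simp
      ultimately have fz: "fst q < fst z" by linarith
      obtain k where k: "k \<in> S" "z \<in> phi k ` K" using zK K_eq by blast
      have "k \<noteq> i"
      proof
        assume "k = i"
        then obtain w where w: "w \<in> K" "z = phi i w" using k by blast
        have wD: "0 \<le> snd w" "snd w \<le> sqrt 3 * (1 - fst w)" using w(1) K_sub_Delta by (auto simp: Delta_eq)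
        have "r i * snd w = 0" using sz w(2) snd_phi[of i w] posi(1) snd_alpha[of i] by simp
        then have "snd w = 0" using r_pos[OF iS] by simp
        then have "fst w \<le> 1" using wD by (simp add: zero_le_mult_iff)
        then have "r i * fst w \<le> r i" using r_pos[OF iS] by simp
        then have "fst z \<le> fst q" using w(2) fst_phi[of i w] fq by simp
        then show False using fz by simp
      qed
      then show "z \<in> R" unfolding R_def using k by blast
    qed
    then have "closure (open_segment q w_beta) \<subseteq> R" using clR closure_minimal by blast
    then have "closed_segment q w_beta \<subseteq> R" using qb by simp
    then have "q \<in> R" using ends_in_segment(1) by blast
    then obtain k where k: "k \<in> S" "k \<noteq> i" "q \<in> phi k ` K" unfolding R_def by blast
    have qi: "q \<in> phi i ` K" unfolding q_def using wb by blast
    obtain u where u: "u \<in> {w_alpha, w_beta, w_gamma}" "u \<in> K" "q = phi k u"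
      using link[OF k(1) iS k(2) k(3) qi] by blast
    have "u \<noteq> w_beta" using u vert_distinct[OF k(1) iS k(2), of w_beta] q_def by auto
    moreover have "u \<noteq> w_gamma"
    proof
      assume "u = w_gamma"
      then have "snd q = base k + r k * (sqrt 3 / 2)" using u(3) snd_gamma by simp
      moreover have "0 < r k * (sqrt 3 / 2)" using r_pos[OF k(1)] by simp
      ultimately show False using sq base_nonneg[OF k(1)] by linarith
    qed
    ultimately have qk: "phi k w_alpha = q" using u by auto
    have knot: "k \<notin> set xs"
    proof
      assume "k \<in> set xs"
      then obtain m where m: "m < L" "xs!m = k" unfolding L_def by (metis in_set_conv_nth)
      have "fst q \<le> fst (phi i w_alpha)" using posi(2)[OF m(1)] m(2) qk by simp
      then show False using fq r_pos[OF iS] by simp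
    qed
    define ys where "ys = xs @ [k]"
    have "ys \<in> CH"
      unfolding CH_def horizontal_chain_def
    proof (intro CollectI conjI allI impI)
      show "ys \<noteq> []" unfolding ys_def by simp
      show "distinct ys" unfolding ys_def using dxs knot by simp
      show "set ys \<subseteq> S" unfolding ys_def using sxs k(1) by simp
      show "hd ys = a" unfolding ys_def using hxs xs_ne by simp
      fix j assume j: "Suc j < length ys"
      show "phi (ys!j) w_beta = phi (ys!Suc j) w_alpha"
      proof (cases "Suc j < L")
        case True then show ?thesis unfolding ys_def using lks L_def by (simp add: nth_append)
      next
        case False
        then have jL: "j = L - 1" "Suc j = L" using j unfolding ys_def L_def by auto
        have "ys!j = i" unfolding ys_def i_def using jL L1 L_def by (simp add: nth_append)
        moreover have "ys!Suc j = k" unfolding ys_def using jL L_def by (simp add: nth_append)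
        ultimately show ?thesis using qk q_def by simp
      qed
    qed
    then have "length ys \<le> length xs" using maxl by blast
    then show False unfolding ys_def by simp
  qed
  have ib: "i = b"
  proof (rule ccontr)
    assume "i \<noteq> b"
    then show False using vert_distinct[OF iS b_in, of w_beta] q_eq q_def b_fix by auto
  qed
  have bxs: "b \<in> set xs" using ib ixs by simp
  have axs: "a \<in> set xs" using hxs xs_ne by auto
  have hs: "horizontal_set N r d (set xs)" unfolding horizontal_set_def using sxs xs(1) unfolding CH_def by blast
  define H where "H = {J. horizontal_set N r d J \<and> set xs \<subseteq> J}"
  have Hsub: "H \<subseteq> Pow S" unfolding H_def horizontal_set_def by auto
  have finH: "finite H" using Hsub finite_subset by (metis S_fin finite_Pow_iff)
  define cm where "cm = Max (card ` H)"
  have "set xs \<in> H" unfolding H_def using hs by simp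
  then have "cm \<in> card ` H" unfolding cm_def using finH by (intro Max_in) auto
  then obtain J where J: "J \<in> H" "card J = cm" by auto
  have blk: "horizontal_block N r d J"
    unfolding horizontal_block_def
  proof (intro conjI allI impI)
    show "horizontal_set N r d J" using J unfolding H_def by simp
    fix J' assume J': "horizontal_set N r d J' \<and> J \<subseteq> J'"
    then have "J' \<in> H" using J unfolding H_def by auto
    then have "card J' \<le> card J" using J finH unfolding cm_def by simp
    moreover have "finite J'" using \<open>J' \<in> H\<close> Hsub finite_subset S_fin by blast
    moreover have "card J \<le> card J'" using card_mono[OF \<open>finite J'\<close>] J' by blast
    ultimately have "card J = card J'" by linarith
    then have "J = J'" using card_subset_eq[OF \<open>finite J'\<close>] J' by blast
    then show "J' = J" by simp
  qed
  show ?thesis using blk J axs bxs unfolding H_def by blast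
qed

end


theorem lemmaA1:
  fixes N :: nat and r :: "nat \<Rightarrow> real" and d :: "nat \<Rightarrow> real \<times> real"
    and K :: "(real \<times> real) set" and a b :: nat
  assumes gasket: "fractal_gasket N r d K"
    and wa: "w_alpha \<in> K" and wb: "w_beta \<in> K"
    and a: "a \<in> {1..N}" "sim r d a w_alpha = w_alpha"
    and b: "b \<in> {1..N}" "sim r d b w_beta = w_beta"
    and top: "top_isolated N r d K \<or> w_gamma \<notin> K"
  shows "(\<forall>x\<in>K. \<forall>C. C = connected_component_set K x \<and> (\<exists>y z. y \<in> C \<and> z \<in> C \<and> y \<noteq> z)
              \<longrightarrow> (\<exists>p q. p \<noteq> q \<and> C = closed_segment p q))
         \<and> ((\<not> (\<exists>I. horizontal_block N r d I \<and> a \<in> I \<and> b \<in> I)) \<longrightarrow> totally_disconnected K)"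
proof -
  interpret G N r d K a b
    using gasket wa wb a b top by unfold_locales auto
  have P1: "\<forall>x\<in>K. \<forall>C. C = connected_component_set K x \<and> (\<exists>y z. y \<in> C \<and> z \<in> C \<and> y \<noteq> z)
              \<longrightarrow> (\<exists>p q. p \<noteq> q \<and> C = closed_segment p q)"
    using comp_segment by blast
  have P2: "totally_disconnected K" if nb: "\<not> (\<exists>I. horizontal_block N r d I \<and> a \<in> I \<and> b \<in> I)"
  proof -
    have ns: "\<not> closed_segment w_alpha w_beta \<subseteq> K" using chain_block nb by blast
    show ?thesis unfolding totally_disconnected_def
    proof
      fix x assume x: "x \<in> K"
      define C where "C = connected_component_set K x"
      have C: "connected C" "C \<subseteq> K" "x \<in> C" unfolding C_def
        using connected_connected_component connected_component_subset connected_component_refl x by auto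
      have "\<And>y. y \<in> C \<Longrightarrow> y = x" using totdisc[OF ns C(1,2)] C(3) by blast
      then show "connected_component_set K x = {x}" using C(3) unfolding C_def by blast
    qed
  qed
  show ?thesis using P1 P2 by blast
qed

end
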